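(* Let $S$ be a set of tasks reported as completed by an algorithm $A$ of type GroupLIS$(\beta)$ in a time interval $I$. Then at least $|S|-n$ of these tasks have their absolute task execution fully contained in $I$.
   Context: Model: $n$ processors with ids $1,\dots,n$ and a shared repository; tasks with ids, arrival times and costs are injected over time, processors may crash and restart. A task is pending if injected and its completion not yet reported. A processor repeatedly obtains the pending set, chooses a task, executes it (taking time proportional to its cost) and reports it; execution is non-preemptive and a crash loses progress. An absolute task execution of task $\tau$ is an interval $[t,t']$ such that a processor schedules $\tau$ at time $t$ and reports its completion at $t'$ without stopping its execution within $[t,t')$. An algorithm is of type GroupLIS$(\beta)$ if it partitions pending tasks into classes of equal cost, sorts each class in increasing order of arrival time, and whenever a class contains at least $\beta n^2$ pending tasks and a processor $p$ schedules a task from that class, it schedules the $(p\cdot\beta n)$-th task of the class. *)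

theory Defs
  imports "HOL-Analysis.Analysis"
begin

text \<open>
  An attempt (tau, s, e, r) of
  processor p means: p scheduled task tau at time s and ran it without
  stopping until time e; if r = True, p reported the completion of tau at
  time e (the attempt is then an absolute task execution [s,e] of tau);
  if r = False, the execution was stopped at time e by a crash (progress lost).
\<close>

type_synonym 'a attempt = "'a \<times> real \<times> real \<times> bool"

definition valid_trace :: "nat \<Rightarrow> (nat \<Rightarrow> 'a attempt set) \<Rightarrow> bool" where
  "valid_trace n att \<longleftrightarrow>
     (\<forall>p. p \<notin> {1..n} \<longrightarrow> att p = {}) \<and>
     (\<forall>p\<in>{1..n}. \<forall>\<tau> s e r. (\<tau>, s, e, r) \<in> att p \<longrightarrow> s \<le> e) \<and>
     (\<forall>p\<in>{1..n}. \<forall>\<tau> s e r \<sigma> u v q.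
        (\<tau>, s, e, r) \<in> att p \<longrightarrow> (\<sigma>, u, v, q) \<in> att p \<longrightarrow>
        (\<tau>, s, e, r) \<noteq> (\<sigma>, u, v, q) \<longrightarrow> e \<le> u \<or> v \<le> s)"

definition abs_exec :: "nat \<Rightarrow> (nat \<Rightarrow> 'a attempt set) \<Rightarrow> 'a \<Rightarrow> real \<Rightarrow> real \<Rightarrow> bool" where
  "abs_exec n att \<tau> s e \<longleftrightarrow> (\<exists>p\<in>{1..n}. (\<tau>, s, e, True) \<in> att p)"

definition reported_in :: "nat \<Rightarrow> (nat \<Rightarrow> 'a attempt set) \<Rightarrow> real set \<Rightarrow> 'a set" where
  "reported_in n att I = {\<tau>. \<exists>p\<in>{1..n}. \<exists>s e. (\<tau>, s, e, True) \<in> att p \<and> e \<in> I}"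

definition pending :: "('a \<Rightarrow> real) \<Rightarrow> nat \<Rightarrow> (nat \<Rightarrow> 'a attempt set) \<Rightarrow> real \<Rightarrow> 'a set" where
  "pending arrival n att t =
     {\<tau>. arrival \<tau> \<le> t \<and> \<not> (\<exists>p\<in>{1..n}. \<exists>s e. (\<tau>, s, e, True) \<in> att p \<and> e < t)}"

definition arr_before :: "('a::linorder \<Rightarrow> real) \<Rightarrow> 'a \<Rightarrow> 'a \<Rightarrow> bool" where
  "arr_before arrival x y \<longleftrightarrow> arrival x < arrival y \<or> (arrival x = arrival y \<and> x < y)"

text \<open>The k-th (1-based) task of C in increasing order of arrival.\<close>
definition kth :: "('a::linorder \<Rightarrow> real) \<Rightarrow> 'a set \<Rightarrow> nat \<Rightarrow> 'a" where
  "kth arrival C k = (THE x. x \<in> C \<and> card {y\<in>C. arr_before arrival y x} + 1 = k)"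

definition group_lis :: "nat \<Rightarrow> ('a::linorder \<Rightarrow> real) \<Rightarrow> ('a \<Rightarrow> real) \<Rightarrow> nat
    \<Rightarrow> (nat \<Rightarrow> 'a attempt set) \<Rightarrow> bool" where
  "group_lis \<beta> arrival cost n att \<longleftrightarrow>
     (\<forall>p\<in>{1..n}. \<forall>\<tau> s e r. (\<tau>, s, e, r) \<in> att p \<longrightarrow>
        \<tau> \<in> pending arrival n att s \<and>
        (let C = {\<sigma> \<in> pending arrival n att s. cost \<sigma> = cost \<tau>} in
          card C \<ge> \<beta> * n^2 \<longrightarrow> \<tau> = kth arrival C (p * \<beta> * n)))"

end

theory Submission
  imports Defs
begin

theorem lemma10:
  fixes n \<beta> :: nat and arrival cost :: "'a::linorder \<Rightarrow> real"
    and att :: "nat \<Rightarrow> 'a attempt set" and I :: "real set" and S :: "'a set"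
  assumes "valid_trace n att"
    and "group_lis \<beta> arrival cost n att"
    and "is_interval I"
    and "finite S"
    and "S \<subseteq> reported_in n att I"
  shows "card {\<tau>\<in>S. \<exists>s e. abs_exec n att \<tau> s e \<and> {s..e} \<subseteq> I} \<ge> card S - n"
proof -
  have iv: "\<And>a b x. a \<in> I \<Longrightarrow> b \<in> I \<Longrightarrow> a \<le> x \<Longrightarrow> x \<le> b \<Longrightarrow> x \<in> I"
    using assms(3) unfolding is_interval_1 by blast
  define G where "G = {\<tau>\<in>S. \<exists>s e. abs_exec n att \<tau> s e \<and> {s..e} \<subseteq> I}"
  define B where "B = S - G"
  have vle: "\<And>p \<tau> s e r. p \<in> {1..n} \<Longrightarrow> (\<tau>, s, e, r) \<in> att p \<Longrightarrow> s \<le> e"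
    using assms(1) unfolding valid_trace_def by blast
  have disj: "\<And>p \<tau> s e r \<sigma> u v q. p \<in> {1..n} \<Longrightarrow> (\<tau>, s, e, r) \<in> att p \<Longrightarrow>
      (\<sigma>, u, v, q) \<in> att p \<Longrightarrow> (\<tau>, s, e, r) \<noteq> (\<sigma>, u, v, q) \<Longrightarrow> e \<le> u \<or> v \<le> s"
    using assms(1) unfolding valid_trace_def by blast
  have bad_s: "s \<notin> I" if "\<tau> \<in> B" "p \<in> {1..n}" "(\<tau>, s, e, True) \<in> att p" "e \<in> I" for \<tau> p s e
  proof
    assume "s \<in> I"
    have "{s..e} \<subseteq> I"
    proof
      fix x assume "x \<in> {s..e}"
      thus "x \<in> I" using iv[OF \<open>s \<in> I\<close> that(4)] by simp
    qed
    moreover have "\<tau> \<in> S" using that(1) unfolding B_def by simp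
    ultimately have "\<tau> \<in> G" using that(2,3) unfolding G_def abs_exec_def by blast
    thus False using that(1) unfolding B_def by auto
  qed
  have uniq: "\<tau> = \<sigma>" if "\<tau> \<in> B" "\<sigma> \<in> B" "p \<in> {1..n}"
      "(\<tau>, s, e, True) \<in> att p" "e \<in> I" "(\<sigma>, u, v, True) \<in> att p" "v \<in> I" for \<tau> \<sigma> p s e u v
  proof (rule ccontr)
    assume ne: "\<tau> \<noteq> \<sigma>"
    have s: "s \<notin> I" "u \<notin> I" using bad_s that by blast+
    have "s \<le> e" "u \<le> v" using vle that by blast+
    moreover have "e \<le> u \<or> v \<le> s" using disj[OF that(3,4,6)] ne by auto
    ultimately show False
    proof (elim conjE disjE)
      assume "e \<le> u" "u \<le> v" thus False using iv[of e v u] s that(5,7) by blast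
    next
      assume "v \<le> s" "s \<le> e" thus False using iv[of v e s] s that(5,7) by blast
    qed
  qed
  define f where "f \<tau> = (SOME p. p \<in> {1..n} \<and> (\<exists>s e. (\<tau>, s, e, True) \<in> att p \<and> e \<in> I))" for \<tau>
  have fp: "f \<tau> \<in> {1..n} \<and> (\<exists>s e. (\<tau>, s, e, True) \<in> att (f \<tau>) \<and> e \<in> I)" if "\<tau> \<in> S" for \<tau>
  proof -
    have "\<exists>p. p \<in> {1..n} \<and> (\<exists>s e. (\<tau>, s, e, True) \<in> att p \<and> e \<in> I)"
      using assms(5) that unfolding reported_in_def by blast
    thus ?thesis unfolding f_def by (rule someI_ex)
  qed
  have "inj_on f B"
  proof (rule inj_onI)
    fix x y assume xy: "x \<in> B" "y \<in> B" "f x = f y"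
    have "x \<in> S" "y \<in> S" using xy unfolding B_def by auto
    then obtain s e u v where "(x, s, e, True) \<in> att (f x)" "e \<in> I"
        "(y, u, v, True) \<in> att (f x)" "v \<in> I" "f x \<in> {1..n}"
      using fp[OF \<open>x \<in> S\<close>] fp[OF \<open>y \<in> S\<close>] xy(3) by metis
    thus "x = y" using uniq[OF xy(1,2)] by blast
  qed
  moreover have "f ` B \<subseteq> {1..n}" using fp unfolding B_def by auto
  ultimately have "card (f ` B) \<le> card {1..n}" "card (f ` B) = card B"
    using card_mono[of "{1..n}" "f ` B"] card_image[of f B] by auto
  hence cb: "card B \<le> n" by simp
  have "G \<subseteq> S" unfolding G_def by auto
  moreover have "finite G" using \<open>G \<subseteq> S\<close> assms(4) finite_subset by blast
  ultimately have "card B = card S - card G" "card G \<le> card S" unfolding B_def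
    using assms(4) by (auto intro: card_Diff_subset card_mono)
  hence "card S = card G + card B" by simp
  thus ?thesis using cb unfolding G_def by linarith
qed

end
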